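(* Let $n\ge 1$, $A\in\mathbb{R}^{n\times n}$ and $C\in\mathbb{R}^{1\times n}$, with $(A,C)$ an observable pair and all eigenvalues of $A$ nonzero. If all eigenvalues of $A$ are positive real numbers, then for any $n$ distinct nonnegative integers $t_1,\ldots,t_n$, the matrix with rows $CA^{t_1},\ldots,CA^{t_n}$ has rank $n$.
   Context: Setting: discrete-time single-output system $x(t+1)=Ax(t)+Bu(t)$, $y(t)=Cx(t)+Du(t)$ with output measured at selected time instances; the matrix with rows $CA^{t_i}$ is the sample-based observability matrix. $(A,C)$ observable means the matrix with rows $C,CA,\ldots,CA^{n-1}$ has rank $n$. *)

theory Defs
  imports "HOL-Analysis.Analysis"
begin

fun matpow :: "'a::semiring_1^'n^'n \<Rightarrow> nat \<Rightarrow> 'a^'n^'n" where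
  "matpow A 0 = mat 1"
| "matpow A (Suc k) = A ** matpow A k"

text \<open>(A,C) observable: the matrix with rows C, CA, ..., CA^(n-1) has rank n
  (rank = dimension of the span of the rows, as in the library definition of rank).\<close>
definition observable :: "real^'n^'n \<Rightarrow> real^'n \<Rightarrow> bool" where
  "observable A C \<longleftrightarrow> vec.dim {C v* matpow A k | k. k < CARD('n)} = CARD('n)"

definition cx_mat :: "real^'n^'m \<Rightarrow> complex^'n^'m" where
  "cx_mat A = (\<chi> i j. complex_of_real (A $ i $ j))"

definition eigenvalue_of :: "real^'n^'n \<Rightarrow> complex \<Rightarrow> bool" where
  "eigenvalue_of A c \<longleftrightarrow> (\<exists>v::complex^'n. v \<noteq> 0 \<and> cx_mat A *v v = c *s v)"

end

theory Submission
  imports Defs "HOL-Computational_Algebra.Fundamental_Theorem_Algebra"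
begin


definition dstep :: "real \<Rightarrow> (nat \<Rightarrow> real) \<Rightarrow> nat \<Rightarrow> real" where
  "dstep l f = (\<lambda>t. f (Suc t) - l * f t)"

fun dops :: "real list \<Rightarrow> (nat \<Rightarrow> real) \<Rightarrow> nat \<Rightarrow> real" where
  "dops [] f = f"
| "dops (l # ls) f = dops ls (dstep l f)"

lemma disc_rolle:
  fixes h :: "nat \<Rightarrow> real"
  assumes "a < b" "\<sigma> * (h b - h a) \<le> 0"
  shows "\<exists>r. a \<le> r \<and> r < b \<and> \<sigma> * (h (Suc r) - h r) \<le> 0"
proof (rule ccontr)
  assume *: "\<not> ?thesis"
  have "h b - h a = (\<Sum>r\<in>{a..<b}. h (Suc r) - h r)"
    using assms(1) by (simp add: sum_Suc_diff')
  hence "\<sigma> * (h b - h a) = (\<Sum>r\<in>{a..<b}. \<sigma> * (h (Suc r) - h r))"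
    by (simp add: sum_distrib_left)
  also have "\<dots> > 0"
    using * assms(1) by (intro sum_pos) auto
  finally show False using assms(2) by simp
qed

lemma Q:
  assumes "\<forall>l\<in>set ls. l > 0" "dops ls f = (\<lambda>_. 0)"
    "\<forall>i<length ls. s i < s (Suc i)"
    "\<forall>i\<le>length ls. (-1)^i * e * f (s i) \<ge> 0" "e \<noteq> 0"
  shows "f = (\<lambda>_. 0)"
  using assms
proof (induction ls arbitrary: f s e)
  case Nil
  then show ?case by simp
next
  case (Cons l ls)
  define g where "g = dstep l f"
  define h where "h t = f t / l ^ t" for t
  have lpos: "l > 0" using Cons.prems by simp
  have hs: "(-1)^i * e * h (s i) \<ge> 0" if "i \<le> Suc (length ls)" for i
  proof -
    have "(-1)^i * e * h (s i) = ((-1)^i * e * f (s i)) / l ^ (s i)"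
      by (simp add: h_def)
    thus ?thesis using Cons.prems(4) that lpos by simp
  qed
  have gh: "g r = l ^ Suc r * (h (Suc r) - h r)" for r
    using lpos by (simp add: g_def dstep_def h_def field_simps)
  have "\<exists>r. s i \<le> r \<and> r < s (Suc i) \<and> (-1)^i * (-e) * g r \<ge> 0" if ii: "i \<le> length ls" for i
  proof -
    have "(-1)^i * e * (h (s (Suc i)) - h (s i)) = - ((-1)^Suc i * e * h (s (Suc i))) - (-1)^i * e * h (s i)"
      by (simp add: algebra_simps)
    also have "\<dots> \<le> 0" using hs[of i] hs[of "Suc i"] that by simp
    finally obtain r where r: "s i \<le> r" "r < s (Suc i)" "(-1)^i * e * (h (Suc r) - h r) \<le> 0"
      using disc_rolle[of "s i" "s (Suc i)" "(-1)^i * e" h] Cons.prems(3) ii by auto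
    have "(-1)^i * (-e) * g r = l ^ Suc r * (- ((-1)^i * e * (h (Suc r) - h r)))"
      by (simp add: gh algebra_simps)
    also have "\<dots> \<ge> 0" using r(3) lpos by (intro mult_nonneg_nonneg) auto
    finally show ?thesis using r by blast
  qed
  then obtain r where r: "\<And>i. i \<le> length ls \<Longrightarrow> s i \<le> r i \<and> r i < s (Suc i) \<and> (-1)^i * (-e) * g (r i) \<ge> 0"
    by metis
  have "g = (\<lambda>_. 0)"
  proof (rule Cons.IH)
    show "\<forall>l\<in>set ls. 0 < l" using Cons.prems by simp
    show "dops ls g = (\<lambda>_. 0)" using Cons.prems by (simp add: g_def)
    show "\<forall>i<length ls. r i < r (Suc i)"
      using r by (meson Suc_leI less_imp_le_nat order.strict_trans2)
    show "\<forall>i\<le>length ls. 0 \<le> (-1)^i * (-e) * g (r i)" using r by blast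
    show "-e \<noteq> 0" using Cons.prems by simp
  qed
  hence fst: "f (Suc t) = l * f t" for t
  proof -
    have "g t = 0" using \<open>g = (\<lambda>_. 0)\<close> by simp
    thus ?thesis by (simp add: g_def dstep_def)
  qed
  have fexp: "f t = l ^ t * f 0" for t
    by (induction t) (simp_all add: fst)
  have "(-1)^0 * e * h (s 0) \<ge> 0" "(-1)^1 * e * h (s 1) \<ge> 0"
    using hs[of 0] hs[of 1] by auto
  moreover have "h t = f 0" for t using lpos fexp[of t] by (simp add: h_def)
  ultimately have "e * f 0 = 0" by simp
  hence "f 0 = 0" using Cons.prems by simp
  show ?case
  proof
    fix t show "f t = 0" using fexp[of t] \<open>f 0 = 0\<close> by simp
  qed
qed



definition itv :: "'a::field^'n^'n \<Rightarrow> nat \<Rightarrow> 'a^'n \<Rightarrow> 'a^'n" where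
  "itv M i = ((*v) M ^^ i)"

lemma itv_0[simp]: "itv M 0 w = w" by (simp add: itv_def)
lemma itv_Suc: "itv M (Suc i) w = itv M i (M *v w)" by (simp add: itv_def funpow_Suc_right del: funpow.simps)
lemma itv_Suc': "itv M (Suc i) w = M *v itv M i w" by (simp add: itv_def)
lemma itv_add: "itv M i (u + v) = itv M i u + itv M i v"
  by (induction i) (simp_all add: itv_Suc' matrix_vector_right_distrib)
lemma itv_diff: "itv M i (u - v) = itv M i u - itv M i v"
  by (induction i) (simp_all add: itv_Suc' matrix_vector_mult_diff_distrib)
lemma itv_scale: "itv M i (c *s v) = c *s itv M i v"
  by (induction i) (simp_all add: itv_Suc' vector_scalar_commute)

definition pv :: "complex^'n^'n \<Rightarrow> complex poly \<Rightarrow> complex^'n \<Rightarrow> complex^'n" where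
  "pv M p w = (\<Sum>i<Suc (degree p). coeff p i *s itv M i w)"

lemma pv_sum:
  assumes "degree p < N"
  shows "pv M p w = (\<Sum>i<N. coeff p i *s itv M i w)"
  unfolding pv_def
proof (rule sum.mono_neutral_left)
  show "\<forall>i\<in>{..<N} - {..<Suc (degree p)}. coeff p i *s itv M i w = 0"
    by (auto simp: coeff_eq_0)
qed (use assms in auto)

lemma pv_add: "pv M (p + q) w = pv M p w + pv M q w"
proof -
  define N where "N = Suc (max (degree p) (degree q))"
  have "degree (p + q) < N" unfolding N_def using degree_add_le_max[of p q] by simp
  thus ?thesis
    by (simp add: pv_sum[where N=N] N_def vector_sadd_rdistrib sum.distrib)
qed

lemma pv_smult: "pv M (smult c p) w = c *s pv M p w"
proof -
  have "degree (smult c p) < Suc (degree p)" by simp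
  thus ?thesis
    by (simp add: pv_sum[where N="Suc (degree p)"] vec.scale_sum_right pv_def vector_smult_assoc)
qed

lemma pv_diffv: "pv M p (u - c *s v) = pv M p u - c *s pv M p v"
  by (simp add: pv_def itv_diff itv_scale vec.scale_sum_right sum_subtractf
      vector_ssub_ldistrib vector_smult_assoc mult.commute)

lemma pv_pCons0: "pv M (pCons 0 p) w = pv M p (M *v w)"
proof -
  have "degree (pCons 0 p) < Suc (Suc (degree p))"
    by (metis degree_pCons_le le_imp_less_Suc)
  hence "pv M (pCons 0 p) w = (\<Sum>i<Suc (Suc (degree p)). coeff (pCons 0 p) i *s itv M i w)"
    by (rule pv_sum)
  also have "\<dots> = (\<Sum>i<Suc (degree p). coeff p i *s itv M (Suc i) w)"
    by (subst sum.lessThan_Suc_shift) simp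
  also have "\<dots> = pv M p (M *v w)" by (simp add: pv_def itv_Suc)
  finally show ?thesis .
qed

lemma pv_one[simp]: "pv M 1 w = w"
  by (simp add: pv_def)

fun opc :: "complex^'n^'n \<Rightarrow> complex list \<Rightarrow> complex^'n \<Rightarrow> complex^'n" where
  "opc M [] w = w"
| "opc M (m # ms) w = opc M ms (M *v w - m *s w)"

lemma pv_lin: "pv M ([:-m, 1:] * q) w = pv M q (M *v w - m *s w)"
proof -
  have "[:-m, 1:] * q = smult (-m) q + pCons 0 q"
    by (simp add: mult_pCons_left)
  hence "pv M ([:-m, 1:] * q) w = pv M (smult (-m) q + pCons 0 q) w" by simp
  also have "\<dots> = - m *s pv M q w + pv M q (M *v w)"
    by (simp only: pv_add pv_smult pv_pCons0)
  also have "\<dots> = pv M q (M *v w - m *s w)"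
    by (simp add: pv_diffv)
  finally show ?thesis .
qed

lemma pv_prod: "pv M (prod_list (map (\<lambda>m. [:-m, 1:]) ms)) w = opc M ms w"
proof (induction ms arbitrary: w)
  case (Cons a ms)
  have "pv M (prod_list (map (\<lambda>m. [:-m, 1:]) (a # ms))) w
      = pv M ([:-a, 1:] * prod_list (map (\<lambda>m. [:-m, 1:]) ms)) w"
    by (simp only: list.map prod_list.Cons)
  also have "\<dots> = opc M (a # ms) w" by (simp only: pv_lin Cons.IH opc.simps)
  finally show ?case .
qed simp

lemma pv_zero[simp]: "pv M 0 w = 0" by (simp add: pv_def)

lemma pv_sum_poly: "finite I \<Longrightarrow> pv M (\<Sum>i\<in>I. f i) w = (\<Sum>i\<in>I. pv M (f i) w)"
  by (induction I rule: finite_induct) (simp_all add: pv_add)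

lemma pv_monom: "pv M (monom c k) w = c *s itv M k w"
proof -
  have "degree (monom c k) < Suc k" by (simp add: degree_monom_le le_imp_less_Suc)
  hence "pv M (monom c k) w = (\<Sum>i<Suc k. coeff (monom c k) i *s itv M i w)"
    by (rule pv_sum)
  also have "\<dots> = (\<Sum>i<Suc k. (if k = i then c *s itv M i w else 0))"
    by (intro sum.cong) (auto simp: coeff_monom)
  also have "\<dots> = c *s itv M k w" by simp
  finally show ?thesis .
qed

lemma coeffs_to_poly:
  fixes M :: "complex^'n^'n"
  assumes "i0 \<le> n" "c i0 \<noteq> 0" "(\<Sum>i\<le>n. c i *s itv M i w) = 0"
  shows "\<exists>p. p \<noteq> 0 \<and> degree p \<le> n \<and> pv M p w = 0"
proof (intro exI conjI)
  define p where "p = (\<Sum>i\<le>n. monom (c i) i)"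
  show "p \<noteq> 0"
  proof
    assume "p = 0"
    hence "coeff p i0 = 0" by simp
    thus False using assms(1,2) by (simp add: p_def coeff_sum_monom)
  qed
  show "degree p \<le> n" unfolding p_def
    by (rule degree_sum_le) (auto intro: order.trans[OF degree_monom_le])
  show "pv M p w = 0" unfolding p_def
    by (simp add: pv_sum_poly pv_monom assms(3))
qed

lemma exists_annih:
  fixes M :: "complex^'n^'n"
  shows "\<exists>p. p \<noteq> 0 \<and> degree p \<le> CARD('n) \<and> pv M p w = 0"
proof (cases "inj_on (\<lambda>i. itv M i w) {..CARD('n)}")
  case False
  then obtain i j where ij: "i \<le> CARD('n)" "j \<le> CARD('n)" "i \<noteq> j" "itv M i w = itv M j w"
    unfolding inj_on_def by auto
  define c where "c k = (if k = i then 1 else if k = j then -1 else (0::complex))" for k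
  have "(\<Sum>k\<le>CARD('n). c k *s itv M k w) = (\<Sum>k\<le>CARD('n). (if k = i then itv M i w else 0) - (if k = j then itv M j w else 0))"
    by (intro sum.cong) (auto simp: c_def ij)
  also have "\<dots> = 0" using ij by (simp add: sum_subtractf)
  finally have sum0: "(\<Sum>k\<le>CARD('n). c k *s itv M k w) = 0" .
  have "c i \<noteq> 0" by (simp add: c_def)
  from coeffs_to_poly[OF ij(1) this sum0] show ?thesis .
next
  case True
  define S where "S = (\<lambda>i. itv M i w) ` {..CARD('n)}"
  have cardS: "card S = Suc CARD('n)" using True by (simp add: S_def card_image)
  have "vec.dependent S"
  proof (rule ccontr)
    assume "\<not> vec.dependent S"
    hence "card S \<le> vec.dim S" using vec.independent_bound_general by blast
    also have "\<dots> \<le> CARD('n)" by (rule dim_subset_UNIV_cart_gen)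
    finally show False using cardS by simp
  qed
  then obtain T u v0 where Tu: "finite T" "T \<subseteq> S" "(\<Sum>v\<in>T. u v *s v) = 0" "v0 \<in> T" "u v0 \<noteq> 0"
    unfolding vec.dependent_explicit by blast
  define c where "c i = (if itv M i w \<in> T then u (itv M i w) else 0)" for i
  obtain i0 where i0: "i0 \<le> CARD('n)" "v0 = itv M i0 w" using Tu(2,4) by (auto simp: S_def)
  define g where "g v = (if v \<in> T then u v *s v else 0)" for v
  have "(\<Sum>i\<le>CARD('n). c i *s itv M i w) = (\<Sum>i\<le>CARD('n). g (itv M i w))"
    by (intro sum.cong) (auto simp: c_def g_def)
  also have "\<dots> = sum g S"
    unfolding S_def by (subst sum.reindex[OF True]) (simp add: comp_def)
  also have "\<dots> = (\<Sum>v\<in>S \<inter> T. u v *s v)"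
    unfolding g_def by (rule sum.inter_restrict[symmetric]) (simp add: S_def)
  also have "\<dots> = (\<Sum>v\<in>T. u v *s v)" using Tu(2) by (simp add: Int_absorb1)
  also have "\<dots> = 0" by (rule Tu(3))
  finally have sum0: "(\<Sum>k\<le>CARD('n). c k *s itv M k w) = 0" .
  have "c i0 \<noteq> 0" using i0 Tu(4,5) by (simp add: c_def)
  from coeffs_to_poly[OF i0(1) this sum0] show ?thesis .
qed



lemma prod_lessThan_list: "(\<Prod>i<d. f i) = prod_list (map f [0..<d])"
  for f :: "nat \<Rightarrow> 'a::comm_monoid_mult"
  by (induction d) (simp_all add: mult.commute)

lemma opc_comm: "opc M ms (M *v w - m *s w) = M *v opc M ms w - m *s opc M ms w"
proof (induction ms arbitrary: w)
  case (Cons a ms)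
  have "M *v (M *v w - m *s w) - a *s (M *v w - m *s w) = M *v (M *v w - a *s w) - m *s (M *v w - a *s w)"
    by (simp add: vec_eq_iff matrix_vector_mult_diff_distrib vector_scalar_commute algebra_simps)
  thus ?case using Cons.IH[of "M *v w - a *s w"] by simp
qed simp

lemma opc_filter:
  assumes "\<And>m u. \<not> P m \<Longrightarrow> M *v u - m *s u = 0 \<Longrightarrow> u = 0"
    and "opc M ms w = 0"
  shows "opc M (filter P ms) w = 0"
  using assms(2)
proof (induction ms arbitrary: w)
  case (Cons a ms)
  show ?case
  proof (cases "P a")
    case True
    thus ?thesis using Cons by simp
  next
    case False
    have "M *v opc M ms w - a *s opc M ms w = 0" using Cons.prems by (simp add: opc_comm[symmetric])
    hence "opc M ms w = 0" using assms(1) False by blast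
    thus ?thesis using Cons.IH False by simp
  qed
qed simp

definition cxv :: "real^'n \<Rightarrow> complex^'n" where
  "cxv v = (\<chi> i. complex_of_real (v $ i))"

fun opr :: "real^'n^'n \<Rightarrow> real list \<Rightarrow> real^'n \<Rightarrow> real^'n" where
  "opr A [] v = v"
| "opr A (l # ls) v = opr A ls (A *v v - l *s v)"

lemma cx_mult: "cx_mat A *v cxv v = cxv (A *v v)"
  by (simp add: vec_eq_iff cxv_def cx_mat_def matrix_vector_mult_def)

lemma cx_opr: "cxv (opr A ls v) = opc (cx_mat A) (map complex_of_real ls) (cxv v)"
proof (induction ls arbitrary: v)
  case (Cons l ls)
  have "cxv (A *v v - l *s v) = cx_mat A *v cxv v - complex_of_real l *s cxv v"
    unfolding cx_mult by (simp add: vec_eq_iff cxv_def)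
  thus ?case using Cons.IH by simp
qed simp

lemma cxv_eq0: "cxv v = 0 \<Longrightarrow> v = 0"
  by (simp add: vec_eq_iff cxv_def)

lemma annih_real:
  fixes A :: "real^'n^'n"
  assumes "\<forall>c. eigenvalue_of A c \<longrightarrow> Im c = 0 \<and> Re c > 0"
  shows "\<exists>ls. (\<forall>l\<in>set ls. l > 0) \<and> length ls \<le> CARD('n) \<and> opr A ls x = 0"
proof -
  define M where "M = cx_mat A"
  define w where "w = cxv x"
  obtain p where p: "p \<noteq> 0" "degree p \<le> CARD('n)" "pv M p w = 0"
    using exists_annih by blast
  obtain root where root: "smult (lead_coeff p) (\<Prod>i<degree p. [:-root i, 1:]) = p"
    using complex_poly_decompose' by blast
  define ms where "ms = map root [0..<degree p]"
  have "p = smult (lead_coeff p) (prod_list (map (\<lambda>m. [:-m, 1:]) ms))"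
    using root by (simp add: ms_def prod_lessThan_list comp_def)
  hence "pv M p w = lead_coeff p *s opc M ms w"
    by (metis pv_prod pv_smult)
  hence "opc M ms w = 0" using p by simp
  hence f: "opc M (filter (eigenvalue_of A) ms) w = 0"
  proof (rule opc_filter[rotated])
    fix m u assume "\<not> eigenvalue_of A m" "M *v u - m *s u = 0"
    thus "u = 0" unfolding eigenvalue_of_def M_def by auto
  qed
  define ls where "ls = map Re (filter (eigenvalue_of A) ms)"
  have "map complex_of_real ls = filter (eigenvalue_of A) ms"
    unfolding ls_def map_map
    by (rule map_idI) (use assms in \<open>auto simp: complex_eq_iff\<close>)
  hence "cxv (opr A ls x) = 0" using f by (simp add: cx_opr M_def w_def)
  hence "opr A ls x = 0" by (rule cxv_eq0)
  moreover have "\<forall>l\<in>set ls. l > 0" using assms by (auto simp: ls_def)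
  moreover have "length ls \<le> CARD('n)"
    using p(2) length_filter_le[of "eigenvalue_of A" ms] by (simp add: ls_def ms_def)
  ultimately show ?thesis by blast
qed



lemma itv_zero[simp]: "itv M k (0::'a::field^'n) = 0"
  by (induction k) (simp_all add: itv_Suc')

lemma dops_seq: "dops ls (\<lambda>t. C \<bullet> itv A t v) = (\<lambda>t. C \<bullet> itv A t (opr A ls v))"
proof (induction ls arbitrary: v)
  case (Cons l ls)
  have "dstep l (\<lambda>t. C \<bullet> itv A t v) = (\<lambda>t. C \<bullet> itv A t (A *v v - l *s v))"
    by (rule ext) (simp add: dstep_def itv_Suc itv_diff itv_scale inner_diff_right,
        simp add: scalar_mult_eq_scaleR)
  thus ?case using Cons.IH by simp
qed simp

lemma matpow_itv: "matpow A k *v x = itv A k x"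
  by (induction k) (simp_all add: itv_Suc' matrix_vector_mul_assoc[symmetric])

theorem corollary1:
  fixes A :: "real^'n^'n" and C :: "real^'n" and t :: "'n \<Rightarrow> nat"
  assumes "observable A C"
    and "\<forall>c. eigenvalue_of A c \<longrightarrow> c \<noteq> 0"
    and "\<forall>c. eigenvalue_of A c \<longrightarrow> Im c = 0 \<and> Re c > 0"
    and "inj t"
  shows "rank (\<chi> i. C v* matpow A (t i)) = CARD('n)"
proof -
  have "x = 0" if Mx: "(\<chi> i. C v* matpow A (t i)) *v x = 0" for x
  proof -
    define f where "f k = C \<bullet> itv A k x" for k
    have zt: "f (t i) = 0" for i
    proof -
      have "((\<chi> i. C v* matpow A (t i)) *v x) $ i = 0" using Mx by simp
      hence "(C v* matpow A (t i)) \<bullet> x = 0"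
        by (simp add: matrix_vector_mult_def inner_vec_def)
      thus ?thesis by (simp add: dot_lmul_matrix matpow_itv f_def)
    qed
    obtain ls where ls: "\<forall>l\<in>set ls. l > 0" "length ls \<le> CARD('n)" "opr A ls x = 0"
      using annih_real[OF assms(3)] by blast
    have dz: "dops ls f = (\<lambda>_. 0)"
      using dops_seq[of ls C A x] ls(3) by (simp add: f_def[abs_def])
    define Z where "Z = range t"
    define L where "L = sorted_list_of_set Z"
    define m where "m = length ls"
    have finZ: "finite Z" by (simp add: Z_def)
    have lenL: "length L = CARD('n)"
      using assms(4) by (simp add: L_def Z_def card_image)
    have setL: "set L = Z" using finZ by (simp add: L_def)
    define s where "s i = (if i < m then L ! i else Max Z + 1 + i)" for i
    have sinc: "\<forall>i<m. s i < s (Suc i)"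
    proof (intro allI impI)
      fix i assume i: "i < m"
      show "s i < s (Suc i)"
      proof (cases "Suc i < m")
        case True
        hence "Suc i < length L" using ls(2) lenL m_def by simp
        hence "L ! i < L ! Suc i"
          using sorted_wrt_nth_less[OF strict_sorted_list_of_set[of Z], of i "Suc i"]
          by (simp add: L_def)
        thus ?thesis using True by (simp add: s_def)
      next
        case False
        have "L ! i \<in> Z" using i ls(2) lenL setL m_def nth_mem by (metis order.strict_trans2)
        hence "L ! i \<le> Max Z" using finZ by simp
        thus ?thesis using False i by (simp add: s_def)
      qed
    qed
    define e :: real where "e = (-1)^m * (if f (s m) \<ge> 0 then 1 else -1)"
    have sgn: "\<forall>i\<le>m. (-1)^i * e * f (s i) \<ge> 0"
    proof (intro allI impI)
      fix i assume i: "i \<le> m"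
      show "(-1)^i * e * f (s i) \<ge> 0"
      proof (cases "i < m")
        case True
        have "L ! i \<in> Z" using True ls(2) lenL setL m_def nth_mem by (metis order.strict_trans2)
        then obtain j where "L ! i = t j" by (auto simp: Z_def)
        thus ?thesis using True zt[of j] by (simp add: s_def)
      next
        case False
        hence "i = m" using i by simp
        have "(-1)^m * e * f (s m) = (if f (s m) \<ge> 0 then f (s m) else - f (s m))"
          by (simp add: e_def power_mult_distrib[symmetric] flip: power_add mult.assoc)
        thus ?thesis using \<open>i = m\<close> by simp
      qed
    qed
    have "e \<noteq> 0" by (simp add: e_def)
    have f0: "f = (\<lambda>_. 0)"
      using Q[OF ls(1) dz] sinc sgn \<open>e \<noteq> 0\<close> by (simp add: m_def)
    have orth: "orthogonal x y" if yS: "y \<in> {C v* matpow A k | k. k < CARD('n)}" for y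
    proof -
      obtain k where "y = C v* matpow A k" using yS by blast
      moreover have "f k = 0" using f0 by simp
      ultimately show ?thesis
        by (simp add: orthogonal_def inner_commute[of x] dot_lmul_matrix matpow_itv f_def)
    qed
    have "vec.span {C v* matpow A k | k. k < CARD('n)} = UNIV"
      using assms(1) unfolding observable_def
      using vec.dim_eq_span[of "{C v* matpow A k | k. k < CARD('n)}" UNIV]
      by (simp add: vec_dim_card vec.span_UNIV card_cart_basis)
    hence "x \<in> span {C v* matpow A k | k. k < CARD('n)}" by (simp add: span_vec_eq)
    hence "orthogonal x x" by (rule orthogonal_to_span) (rule orth)
    thus "x = 0" by (simp add: orthogonal_def)
  qed
  thus ?thesis
    using matrix_nonfull_linear_equations_eq by blast
qed

end
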